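(* Let $G=(V,E)$ be a finite graph. The function $S^B_G$ is non-negative and concave on $FM(G)$.
   Context: $FM(G)=\{\mathbf{x}\in\mathbb{R}^E: x_e\ge0,\ \sum_{e\in\partial v}x_e\le1\ \forall v\in V\}$, where $\partial v$ is the set of edges incident to $v$, and \[ S^B_G(\mathbf{x})=\sum_{e\in E}\big( -x_e\ln x_e +(1-x_e)\ln (1-x_e)\big) - \sum_{v\in V}\Big( 1-\sum_{e\in \partial v} x_e\Big)\ln\Big( 1-\sum_{e\in \partial v}x_e\Big), \] with $0\ln 0=0$. *)

theory Defs
  imports Complex_Main
begin

definition finite_graph :: "'v set \<Rightarrow> 'v set set \<Rightarrow> bool" where
  "finite_graph V E \<longleftrightarrow> finite V \<and> (\<forall>e\<in>E. e \<subseteq> V \<and> card e = 2)"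

definition incident :: "'v set set \<Rightarrow> 'v \<Rightarrow> 'v set set" where
  "incident E v = {e \<in> E. v \<in> e}"

text \<open>The fractional matching polytope; a point of R^E is a function on edges,
  values outside E are required to be 0 (so that it is really a vector in R^E).\<close>
definition FM :: "'v set \<Rightarrow> 'v set set \<Rightarrow> ('v set \<Rightarrow> real) set" where
  "FM V E = {x. (\<forall>e. e \<notin> E \<longrightarrow> x e = 0) \<and> (\<forall>e\<in>E. x e \<ge> 0) \<and>
                (\<forall>v\<in>V. (\<Sum>e\<in>incident E v. x e) \<le> 1)}"

definition xlnx :: "real \<Rightarrow> real" where
  "xlnx t = (if t = 0 then 0 else t * ln t)"

definition bethe_entropy :: "'v set \<Rightarrow> 'v set set \<Rightarrow> ('v set \<Rightarrow> real) \<Rightarrow> real" where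
  "bethe_entropy V E x =
     (\<Sum>e\<in>E. - xlnx (x e) + xlnx (1 - x e))
     - (\<Sum>v\<in>V. xlnx (1 - (\<Sum>e\<in>incident E v. x e)))"

definition concave_on_set :: "('a \<Rightarrow> real) set \<Rightarrow> (('a \<Rightarrow> real) \<Rightarrow> real) \<Rightarrow> bool" where
  "concave_on_set S f \<longleftrightarrow>
     (\<forall>x\<in>S. \<forall>y\<in>S. \<forall>t::real. 0 \<le> t \<and> t \<le> 1 \<longrightarrow>
        t * f x + (1 - t) * f y \<le> f (\<lambda>e. t * x e + (1 - t) * y e))"

end

theory Submission
  imports Defs
begin

lemma xlnx_eq: "xlnx u = u * ln u" by (simp add: xlnx_def)

lemma xlnx_lim0: "((\<lambda>u::real. u * ln u) \<longlongrightarrow> 0) (at_right 0)"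
proof -
  have "((\<lambda>u. ln (inverse u) / inverse u) \<longlongrightarrow> (0::real)) (at_right 0)"
    using filterlim_compose[OF ln_x_over_x_tendsto_0 filterlim_inverse_at_top_right] by (simp add: o_def)
  then have "((\<lambda>u. - (ln (inverse u) / inverse u)) \<longlongrightarrow> - (0::real)) (at_right 0)"
    by (intro tendsto_minus) (simp add: o_def)
  moreover have "eventually (\<lambda>u. - (ln (inverse u) / inverse u) = u * ln u) (at_right (0::real))"
    unfolding eventually_at_right_field
    by (rule exI[of _ 1]) (auto simp: ln_inverse ln_div field_simps)
  ultimately show ?thesis using tendsto_cong by fastforce
qed

lemma cont_xlnx0: "continuous_on {0..} (\<lambda>u::real. u * ln u)"
  unfolding continuous_on_def
proof
  fix u :: real assume u: "u \<in> {0..}"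
  show "((\<lambda>u. u * ln u) \<longlongrightarrow> u * ln u) (at u within {0..})"
  proof (cases "u = 0")
    case True
    have e: "at (0::real) within {0..} = at_right 0"
      unfolding at_within_def by (rule arg_cong[where f="\<lambda>S. inf (nhds 0) (principal S)"]) auto
    show ?thesis using True e xlnx_lim0 by simp
  next
    case False
    then have "u > 0" using u by auto
    then have "isCont (\<lambda>u. u * ln u) u" by (intro continuous_intros) auto
    then show ?thesis unfolding isCont_def using tendsto_mono at_le subset_UNIV by metis
  qed
qed


lemma pos_interior:
  fixes a d t :: real
  assumes "0 \<le> a" "0 \<le> a + d" "d \<noteq> 0" "0 < t" "t < 1"
  shows "0 < a + t * d"
proof (cases "d > 0")
  case True then show ?thesis using assms by (simp add: add_nonneg_pos)
next
  case False
  then have "d < 0" using assms by auto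
  then have "a > 0" using assms by auto
  have "a + t * d = (1 - t) * a + t * (a + d)" by (simp add: algebra_simps)
  also have "\<dots> > 0" using \<open>a > 0\<close> assms by (intro add_pos_nonneg) auto
  finally show ?thesis .
qed

lemma term_cont:
  fixes a d :: real
  assumes "0 \<le> a" "0 \<le> a + d"
  shows "continuous_on {0..1} (\<lambda>s. xlnx (a + s * d))"
proof -
  have img: "(\<lambda>s. a + s * d) ` {0..1} \<subseteq> {0..}"
  proof
    fix u assume "u \<in> (\<lambda>s. a + s * d) ` {0..1}"
    then obtain s where s: "0 \<le> s" "s \<le> 1" "u = a + s * d" by auto
    have "a + s * d = (1 - s) * a + s * (a + d)" by (simp add: algebra_simps)
    also have "\<dots> \<ge> 0" using s assms by (simp add: add_nonneg_nonneg)
    finally show "u \<in> {0..}" using s by auto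
  qed
  have "continuous_on {0..1} (\<lambda>s. a + s * d)" by (intro continuous_intros)
  from continuous_on_compose2[OF cont_xlnx0 this img] show ?thesis by (simp add: xlnx_eq)
qed

lemma term_deriv:
  fixes a d t :: real
  assumes "0 \<le> a" "0 \<le> a + d" "0 < t" "t < 1"
  shows "((\<lambda>s. xlnx (a + s * d)) has_real_derivative d * (ln (a + t * d) + 1)) (at t)"
    and "((\<lambda>s. d * (ln (a + s * d) + 1)) has_real_derivative d^2 / (a + t * d)) (at t)"
proof -
  have "((\<lambda>s. xlnx (a + s * d)) has_real_derivative d * (ln (a + t * d) + 1)) (at t) \<and>
    ((\<lambda>s. d * (ln (a + s * d) + 1)) has_real_derivative d^2 / (a + t * d)) (at t)"
  proof (cases "d = 0")
    case True then show ?thesis by simp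
  next
    case False
    then have p: "0 < a + t * d" using pos_interior assms by blast
    have hl: "((\<lambda>s. a + s * d) has_real_derivative d) (at t)"
      by (rule DERIV_cong[OF DERIV_add[OF DERIV_const DERIV_mult[OF DERIV_ident DERIV_const]]]) simp
    have hf: "((\<lambda>u. u * ln u) has_real_derivative (ln (a + t * d) + 1)) (at (a + t * d))"
      by (rule DERIV_cong[OF DERIV_mult[OF DERIV_ident DERIV_ln[OF p]]]) (use p in simp)
    have 1: "((\<lambda>s. (a + s * d) * ln (a + s * d)) has_real_derivative d * (ln (a + t * d) + 1)) (at t)"
      by (rule DERIV_cong[OF DERIV_chain2[OF hf hl]]) simp
    have hln: "((\<lambda>s. ln (a + s * d)) has_real_derivative inverse (a + t * d) * d) (at t)"
      by (rule DERIV_chain2[OF DERIV_ln[OF p] hl])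
    have 2: "((\<lambda>s. d * (ln (a + s * d) + 1)) has_real_derivative d^2 / (a + t * d)) (at t)"
      by (rule DERIV_cong[OF DERIV_cmult[OF DERIV_add[OF hln DERIV_const]]])
         (simp add: power2_eq_square field_simps)
    show ?thesis using 1 2 by (simp add: xlnx_eq)
  qed
  then show "((\<lambda>s. xlnx (a + s * d)) has_real_derivative d * (ln (a + t * d) + 1)) (at t)"
    and "((\<lambda>s. d * (ln (a + s * d) + 1)) has_real_derivative d^2 / (a + t * d)) (at t)" by auto
qed

lemma concave_interval:
  fixes g g1 g2 :: "real \<Rightarrow> real"
  assumes cont: "continuous_on {0..1} g"
  and d1: "\<And>t. 0<t \<Longrightarrow> t<1 \<Longrightarrow> (g has_real_derivative g1 t) (at t)"
  and d2: "\<And>t. 0<t \<Longrightarrow> t<1 \<Longrightarrow> (g1 has_real_derivative g2 t) (at t)"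
  and neg: "\<And>t. 0<t \<Longrightarrow> t<1 \<Longrightarrow> g2 t \<le> 0"
  and t: "0 \<le> t" "t \<le> 1"
  shows "t * g 1 + (1-t) * g 0 \<le> g t"
proof (cases "t = 0 \<or> t = 1")
  case True then show ?thesis by auto
next
  case False
  then have t': "0 < t" "t < 1" using t by auto
  have dg: "g differentiable (at x)" if "0 < x" "x < 1" for x
    using d1[OF that] real_differentiable_def by blast
  have dg1: "g1 differentiable (at x)" if "0 < x" "x < 1" for x
    using d2[OF that] real_differentiable_def by blast
  have c0: "continuous_on {0..t} g" by (rule continuous_on_subset[OF cont]) (use t' in auto)
  obtain l z where z: "0 < z" "z < t" "DERIV g z :> l" "g t - g 0 = (t - 0) * l"
    using MVT[OF t'(1) c0] dg t' by (meson less_trans)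
  have lz: "l = g1 z" using DERIV_unique[OF z(3) d1] z t' by simp
  have c1': "continuous_on {t..1} g" by (rule continuous_on_subset[OF cont]) (use t' in auto)
  obtain l2 z2 where z2: "t < z2" "z2 < 1" "DERIV g z2 :> l2" "g 1 - g t = (1 - t) * l2"
    using MVT[OF t'(2) c1'] dg t' by (meson less_trans)
  have lz2: "l2 = g1 z2" using DERIV_unique[OF z2(3) d1] z2 t' by simp
  have "z < z2" using z z2 by auto
  have c1: "continuous_on {z..z2} g1"
  proof (intro continuous_at_imp_continuous_on ballI)
    fix x assume "x \<in> {z..z2}"
    then have "0 < x" "x < 1" using z z2 t' by auto
    then show "isCont g1 x" using d2 DERIV_isCont by blast
  qed
  obtain l3 w where w: "z < w" "w < z2" "DERIV g1 w :> l3" "g1 z2 - g1 z = (z2 - z) * l3"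
    using MVT[OF \<open>z < z2\<close> c1] dg1 z z2 t' by (meson less_trans)
  have "l3 = g2 w" using DERIV_unique[OF w(3) d2] w z z2 t' by simp
  then have "l3 \<le> 0" using neg w z z2 t' by force
  then have "(z2 - z) * l3 \<le> 0" using \<open>z < z2\<close> by (intro mult_nonneg_nonpos) auto
  then have "g1 z2 \<le> g1 z" using w(4) by linarith
  then have "t * (1 - t) * g1 z2 \<le> t * (1 - t) * g1 z"
    using t' by (intro mult_left_mono) auto
  moreover have "t * (g 1 - g t) = t * (1 - t) * g1 z2" using z2(4) lz2 by simp
  moreover have "(1 - t) * (g t - g 0) = t * (1 - t) * g1 z" using z(4) lz by simp
  moreover have "t * g 1 + (1 - t) * g 0 - g t = t * (g 1 - g t) - (1 - t) * (g t - g 0)"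
    by (simp add: algebra_simps)
  ultimately show ?thesis by linarith
qed

lemma aux: fixes a y e :: real
  assumes "a \<noteq> 0" "a \<noteq> 1" "y \<noteq> 1" "y*2 \<noteq> 1"
  shows "e/a - e/(1-a) - e/(a*(1-y)/(1-2*y)) = e*(y-a)/(a*(1-a)*(1-y))"
proof -
  have n: "1 - a \<noteq> 0" "1 - y \<noteq> 0" "1 - 2*y \<noteq> 0" using assms by auto
  have "e/(a*(1-y)/(1-2*y)) = e*(1-2*y)/(a*(1-y))" by simp
  then show ?thesis using assms n
    apply (simp add: divide_simps)
    apply (simp add: algebra_simps)
    done
qed

lemma titu2:
  fixes u v p q :: real
  assumes "0 \<le> p" "0 \<le> q" "p = 0 \<Longrightarrow> u = 0" "q = 0 \<Longrightarrow> v = 0"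
  shows "(u + v)^2 / (p + q) \<le> u^2 / p + v^2 / q"
proof (cases "p = 0 \<or> q = 0")
  case True then show ?thesis using assms by auto
next
  case False
  then have pq: "p > 0" "q > 0" using assms by auto
  have "u^2 / p + v^2 / q - (u + v)^2 / (p + q) = (u*q - v*p)^2 / (p*q*(p+q))"
    using pq by (simp add: field_simps power2_eq_square)
  also have "\<dots> \<ge> 0" using pq by simp
  finally show ?thesis by simp
qed

lemma titu:
  fixes a w :: "'a \<Rightarrow> real"
  assumes "finite A" "\<And>i. i \<in> A \<Longrightarrow> 0 \<le> w i" "\<And>i. i \<in> A \<Longrightarrow> w i = 0 \<Longrightarrow> a i = 0"
  shows "(\<Sum>i\<in>A. a i)^2 / (\<Sum>i\<in>A. w i) \<le> (\<Sum>i\<in>A. a i^2 / w i)"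
  using assms
proof (induction A rule: finite_induct)
  case empty then show ?case by simp
next
  case (insert x F)
  have z: "(\<Sum>i\<in>F. w i) = 0 \<Longrightarrow> (\<Sum>i\<in>F. a i) = 0"
  proof -
    assume "(\<Sum>i\<in>F. w i) = 0"
    then have "\<forall>i\<in>F. w i = 0" using sum_nonneg_eq_0_iff[OF insert(1)] insert(4) by auto
    then show ?thesis using insert(5) by auto
  qed
  have "(\<Sum>i\<in>insert x F. a i)^2 / (\<Sum>i\<in>insert x F. w i) = (a x + (\<Sum>i\<in>F. a i))^2 / (w x + (\<Sum>i\<in>F. w i))"
    using insert by simp
  also have "\<dots> \<le> a x ^2 / w x + (\<Sum>i\<in>F. a i)^2 / (\<Sum>i\<in>F. w i)"
    by (rule titu2) (use insert z in \<open>auto intro: sum_nonneg\<close>)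
  also have "\<dots> \<le> a x ^2 / w x + (\<Sum>i\<in>F. a i^2 / w i)"
    using insert by auto
  finally show ?case using insert by simp
qed

lemma vertex_ineq:
  fixes I :: "'a set" and x d :: "'a \<Rightarrow> real" and r :: real
  assumes fin: "finite I" and x0: "\<And>i. i\<in>I \<Longrightarrow> 0 \<le> x i"
    and r: "r = 1 - (\<Sum>i\<in>I. x i)" "0 \<le> r"
    and pos: "\<And>i. i\<in>I \<Longrightarrow> d i \<noteq> 0 \<Longrightarrow> 0 < x i \<and> x i < 1"
    and posr: "(\<Sum>i\<in>I. d i) \<noteq> 0 \<Longrightarrow> 0 < r"
  shows "(\<Sum>i\<in>I. d i^2/(1 - x i) - d i^2/x i) \<le> 2 * (\<Sum>i\<in>I. d i)^2 / r"
proof (cases "\<exists>j\<in>I. d j \<noteq> 0 \<and> x j > 1/2")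
  case False
  have "(\<Sum>i\<in>I. d i^2/(1 - x i) - d i^2/x i) \<le> 0"
  proof (rule sum_nonpos)
    fix i assume i: "i \<in> I"
    show "d i^2/(1 - x i) - d i^2/x i \<le> 0"
    proof (cases "d i = 0")
      case True then show ?thesis by simp
    next
      case F: False
      then have "0 < x i" "x i \<le> 1/2" using pos[OF i] False i by auto
      then have "d i^2/(1 - x i) \<le> d i^2/x i" by (intro divide_left_mono) auto
      then show ?thesis by simp
    qed
  qed
  moreover have "0 \<le> 2 * (\<Sum>i\<in>I. d i)^2 / r" using r by simp
  ultimately show ?thesis by linarith
next
  case True
  then obtain j where j: "j \<in> I" "d j \<noteq> 0" "x j > 1/2" by auto
  define J where "J = I - {j}"
  have finJ: "finite J" using fin J_def by auto
  have sumI: "(\<Sum>i\<in>I. f i) = f j + (\<Sum>i\<in>J. f i)" for f :: "'a \<Rightarrow> real"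
    unfolding J_def using fin j(1) by (simp add: sum.remove)
  define y where "y = (\<Sum>i\<in>J. x i)"
  have y0: "0 \<le> y" unfolding y_def using x0 J_def by (auto intro: sum_nonneg)
  have xj: "x j = 1 - r - y" using r(1) sumI[of x] y_def by simp
  have xj1: "x j < 1" using pos j by auto
  have q: "0 < r + y" using xj xj1 by simp
  have ry: "r + y < 1/2" using xj j by simp
  have y12: "y < 1/2" using ry r by simp
  have xiy: "x i \<le> y" if "i \<in> J" for i
    unfolding y_def using that finJ x0 J_def by (intro member_le_sum) auto
  define W where "W = y*(1-y)/(1-2*y)"
  define w where "w i = x i*(1-y)/(1-2*y)" for i
  have W: "(\<Sum>i\<in>J. w i) = W" unfolding w_def W_def y_def
    by (simp add: sum_divide_distrib[symmetric] sum_distrib_right[symmetric])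
  have W0: "0 \<le> W" unfolding W_def using y0 y12 by simp
  define D where "D = (\<Sum>i\<in>I. d i)"
  define A where "A = (\<Sum>i\<in>J. d i)"
  have dj: "d j = D + (- A)" using sumI[of d] D_def A_def by simp
  have WA: "A = 0" if "W = 0"
  proof -
    have "y = 0" using that y0 y12 unfolding W_def by auto
    then have "\<forall>i\<in>J. x i = 0" using sum_nonneg_eq_0_iff[OF finJ] x0 J_def y_def by auto
    then have "\<forall>i\<in>J. d i = 0" using pos J_def by force
    then show ?thesis unfolding A_def by simp
  qed
  have stepb: "d j^2 / (r/2 + W) \<le> D^2/(r/2) + (-A)^2 / W"
    unfolding dj by (rule titu2) (use r(2) W0 WA posr D_def in auto)
  have stepc: "A^2 / W \<le> (\<Sum>i\<in>J. d i^2 / w i)"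
    unfolding A_def W[symmetric]
  proof (rule titu[OF finJ])
    fix i assume i: "i \<in> J"
    show "0 \<le> w i" unfolding w_def using x0 i J_def y12 y0 by simp
    assume "w i = 0"
    then have "x i = 0" unfolding w_def using y12 by simp
    then show "d i = 0" using pos i J_def by force
  qed
  have stepd: "d i^2 / w i + (d i^2/(1 - x i) - d i^2/x i) \<le> 0" if i: "i \<in> J" for i
  proof (cases "d i = 0")
    case True then show ?thesis by simp
  next
    case False
    then have xi: "0 < x i" "x i \<le> y" using pos i J_def xiy by auto
    have "d i^2/x i - d i^2/(1 - x i) - d i^2 / w i = d i^2 * (y - x i) / (x i * (1 - x i) * (1 - y))"
      unfolding w_def by (rule aux) (use xi y12 in auto)
    also have "\<dots> \<ge> 0" using xi y12 by (intro divide_nonneg_pos mult_nonneg_nonneg) auto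
    finally show ?thesis by simp
  qed
  have K: "(2 * x j - 1) * (r/2 + W) \<le> x j * (r + y)"
  proof -
    have "(x j * (r + y) - (2 * x j - 1) * (r/2 + W)) * (1 - 2*y) = r*(1-2*y)^2/2 + 2*r*y*(1-y)"
      unfolding xj W_def using y12 by (simp add: field_simps) (simp add: algebra_simps power2_eq_square)
    also have "\<dots> \<ge> 0" using r(2) y0 y12 by simp
    finally have "0 \<le> (x j * (r + y) - (2 * x j - 1) * (r/2 + W)) * (1 - 2*y)" .
    then have "0 \<le> x j * (r + y) - (2 * x j - 1) * (r/2 + W)" using y12
      by (simp add: zero_le_mult_iff)
    then show ?thesis by simp
  qed
  have stepa: "d j^2/(1 - x j) - d j^2/x j \<le> d j^2 / (r/2 + W)"
  proof -
    have rw: "0 < r/2 + W"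
    proof (cases "r = 0")
      case True
      then have "0 < y" using q by simp
      then have "0 < W" unfolding W_def using y12 by (simp add: divide_pos_pos)
      then show ?thesis using True by simp
    next
      case False then show ?thesis using r(2) W0 by simp
    qed
    have "1/(1 - x j) - 1/x j = (2 * x j - 1) / (x j * (r + y))"
    proof -
      have e: "r + y = 1 - x j" using xj by simp
      have "x j \<noteq> 0" "1 - x j \<noteq> 0" using j xj1 by auto
      then show ?thesis unfolding e by (simp add: field_simps)
    qed
    also have "\<dots> \<le> 1 / (r/2 + W)"
      using K rw j q by (simp add: divide_simps mult.commute)
    finally have "1/(1 - x j) - 1/x j \<le> 1 / (r/2 + W)" .
    then have "d j^2 * (1/(1 - x j) - 1/x j) \<le> d j^2 * (1 / (r/2 + W))"
      by (intro mult_left_mono) auto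
    then show ?thesis by (simp add: right_diff_distrib)
  qed
  have "(\<Sum>i\<in>I. d i^2/(1 - x i) - d i^2/x i)
      = (d j^2/(1 - x j) - d j^2/x j) + (\<Sum>i\<in>J. d i^2/(1 - x i) - d i^2/x i)" by (rule sumI)
  also have "\<dots> \<le> D^2/(r/2) + (\<Sum>i\<in>J. d i^2 / w i) + (\<Sum>i\<in>J. d i^2/(1 - x i) - d i^2/x i)"
    using stepa stepb stepc by simp
  also have "\<dots> = D^2/(r/2) + (\<Sum>i\<in>J. d i^2 / w i + (d i^2/(1 - x i) - d i^2/x i))"
    by (simp add: sum.distrib)
  also have "\<dots> \<le> D^2/(r/2)" using stepd sum_nonpos[of J] by (smt (verit) sum_nonpos)
  also have "\<dots> = 2 * (\<Sum>i\<in>I. d i)^2 / r" unfolding D_def by simp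
  finally show ?thesis .
qed


definition psi :: "real \<Rightarrow> real" where "psi p = xlnx (1 - p) - xlnx p"

lemma psi_concave:
  fixes u w t :: real
  assumes u: "0 \<le> u" "u \<le> 1/2" and w: "0 \<le> w" "w \<le> 1/2" and t: "0 \<le> t" "t \<le> 1"
  shows "t * psi u + (1 - t) * psi w \<le> psi (t * u + (1 - t) * w)"
proof -
  define g where "g s = xlnx ((1 - w) + s * (-(u - w))) - xlnx (w + s * (u - w))" for s
  define g1 where "g1 s = (-(u - w)) * (ln ((1 - w) + s * (-(u - w))) + 1) - (u - w) * (ln (w + s * (u - w)) + 1)" for s
  define g2 where "g2 s = (-(u - w))^2 / ((1 - w) + s * (-(u - w))) - (u - w)^2 / (w + s * (u - w))" for s
  have a1: "0 \<le> 1 - w" "0 \<le> (1 - w) + (-(u - w))" using u w by auto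
  have a2: "0 \<le> w" "0 \<le> w + (u - w)" using u w by auto
  have "t * g 1 + (1 - t) * g 0 \<le> g t"
  proof (rule concave_interval[of g g1 g2])
    show "continuous_on {0..1} g" unfolding g_def
      by (intro continuous_on_diff term_cont a1 a2)
    fix s :: real assume s: "0 < s" "s < 1"
    show "(g has_real_derivative g1 s) (at s)" unfolding g_def g1_def
      by (intro DERIV_diff term_deriv(1) a1 a2 s)
    show "(g1 has_real_derivative g2 s) (at s)" unfolding g1_def g2_def
      by (intro DERIV_diff term_deriv(2) a1 a2 s)
    show "g2 s \<le> 0"
    proof (cases "u = w")
      case True then show ?thesis by (simp add: g2_def)
    next
      case False
      then have p: "0 < w + s * (u - w)" using pos_interior a2 s by auto
      have "w + s * (u - w) = (1 - s) * w + s * u" by (simp add: algebra_simps)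
      also have "\<dots> \<le> (1 - s) * (1/2) + s * (1/2)"
        using s u w by (intro add_mono mult_left_mono) auto
      also have "\<dots> = 1/2" by (simp add: field_simps)
      finally have le: "w + s * (u - w) \<le> 1/2" .
      have e: "(1 - w) + s * (-(u - w)) = 1 - (w + s * (u - w))" by (simp add: algebra_simps)
      have "(u - w)^2 / (1 - (w + s * (u - w))) \<le> (u - w)^2 / (w + s * (u - w))"
        by (rule divide_left_mono) (use p le in \<open>auto intro!: mult_pos_pos\<close>)
      then have "(u - w)^2 / ((1 - w) + s * (-(u - w))) \<le> (u - w)^2 / (w + s * (u - w))"
        unfolding e .
      moreover have "(-(u - w))^2 = (u - w)^2" by (rule power2_minus)
      ultimately show ?thesis unfolding g2_def by simp
    qed
  qed (use t in auto)
  moreover have "g 1 = psi u" "g 0 = psi w" "g t = psi (t * u + (1 - t) * w)"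
    unfolding g_def psi_def by (simp_all add: algebra_simps)
  ultimately show ?thesis by simp
qed

lemma psi_0: "psi 0 = 0" by (simp add: psi_def xlnx_def)
lemma psi_half: "psi (1/2) = 0" by (simp add: psi_def)

lemma psi_nonneg: assumes "0 \<le> p" "p \<le> 1/2" shows "0 \<le> psi p"
proof -
  have "(2*p) * psi (1/2) + (1 - 2*p) * psi 0 \<le> psi ((2*p) * (1/2) + (1 - 2*p) * 0)"
    using assms by (intro psi_concave) auto
  then show ?thesis by (simp add: psi_0 psi_half)
qed

lemma psi_subadd:
  assumes "0 \<le> a" "0 \<le> b" "a + b \<le> 1/2"
  shows "psi (a + b) \<le> psi a + psi b"
proof (cases "a + b = 0")
  case True then have "a = 0" "b = 0" using assms by auto
  then show ?thesis by (simp add: psi_0)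
next
  case False
  then have ab: "a + b > 0" using assms by auto
  define t where "t = a / (a + b)"
  have t: "0 \<le> t" "t \<le> 1" using assms ab by (auto simp: t_def)
  have 1: "t * psi (a + b) + (1 - t) * psi 0 \<le> psi (t * (a + b) + (1 - t) * 0)"
    using assms t by (intro psi_concave) auto
  have 2: "(1 - t) * psi (a + b) + (1 - (1 - t)) * psi 0 \<le> psi ((1 - t) * (a + b) + (1 - (1 - t)) * 0)"
    using assms t by (intro psi_concave) auto
  have e1: "t * (a + b) = a" using ab by (simp add: t_def)
  have e2: "(1 - t) * (a + b) = b" using ab by (simp add: t_def field_simps)
  show ?thesis using 1 2 e1 e2 by (simp add: psi_0 algebra_simps)
qed

lemma psi_sum:
  assumes "finite J" "\<And>i. i \<in> J \<Longrightarrow> 0 \<le> x i" "(\<Sum>i\<in>J. x i) \<le> 1/2"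
  shows "psi (\<Sum>i\<in>J. x i) \<le> (\<Sum>i\<in>J. psi (x i))"
  using assms
proof (induction J rule: finite_induct)
  case empty then show ?case by (simp add: psi_0)
next
  case (insert a F)
  have F0: "0 \<le> (\<Sum>i\<in>F. x i)" using insert by (auto intro: sum_nonneg)
  have "psi (\<Sum>i\<in>insert a F. x i) = psi (x a + (\<Sum>i\<in>F. x i))" using insert by simp
  also have "\<dots> \<le> psi (x a) + psi (\<Sum>i\<in>F. x i)"
    using insert F0 by (intro psi_subadd) auto
  also have "\<dots> \<le> psi (x a) + (\<Sum>i\<in>F. psi (x i))"
  proof -
    have xa: "0 \<le> x a" using insert by auto
    have "x a + (\<Sum>i\<in>F. x i) \<le> 1/2" using insert by simp
    then have "(\<Sum>i\<in>F. x i) \<le> 1/2" using xa by linarith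
    then show ?thesis using insert by simp
  qed
  finally show ?case using insert by simp
qed

lemma xlnx_superadd:
  fixes a b :: real assumes "0 \<le> a" "0 \<le> b"
  shows "xlnx a + xlnx b \<le> xlnx (a + b)"
proof -
  have "a * ln a \<le> a * ln (a + b)"
  proof (cases "a = 0")
    case False then show ?thesis using assms by (intro mult_left_mono) auto
  qed simp
  moreover have "b * ln b \<le> b * ln (a + b)"
  proof (cases "b = 0")
    case False then show ?thesis using assms by (intro mult_left_mono) auto
  qed simp
  ultimately show ?thesis by (simp add: xlnx_eq distrib_right)
qed

lemma xlnx_nonpos: fixes r :: real assumes "0 \<le> r" "r \<le> 1" shows "xlnx r \<le> 0"
proof (cases "r = 0")
  case False then show ?thesis using assms by (simp add: xlnx_eq mult_nonneg_nonpos)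
qed (simp add: xlnx_def)

lemma vertex_nonneg:
  fixes I :: "'a set" and x :: "'a \<Rightarrow> real" and r :: real
  assumes fin: "finite I" and x0: "\<And>i. i\<in>I \<Longrightarrow> 0 \<le> x i"
    and r: "r = 1 - (\<Sum>i\<in>I. x i)" "0 \<le> r"
  shows "0 \<le> (\<Sum>i\<in>I. psi (x i)) / 2 - xlnx r"
proof -
  have r1: "r \<le> 1" using r x0 by (simp add: sum_nonneg)
  have xr: "xlnx r \<le> 0" using xlnx_nonpos r r1 by simp
  show ?thesis
  proof (cases "\<exists>j\<in>I. x j > 1/2")
    case False
    then have "0 \<le> (\<Sum>i\<in>I. psi (x i))" using x0 by (intro sum_nonneg psi_nonneg) auto
    then show ?thesis using xr by simp
  next
    case True
    then obtain j where j: "j \<in> I" "x j > 1/2" by auto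
    define J where "J = I - {j}"
    have finJ: "finite J" using fin J_def by auto
    have sumI: "(\<Sum>i\<in>I. f i) = f j + (\<Sum>i\<in>J. f i)" for f :: "'a \<Rightarrow> real"
      unfolding J_def using fin j(1) by (simp add: sum.remove)
    define y where "y = (\<Sum>i\<in>J. x i)"
    have y0: "0 \<le> y" unfolding y_def using x0 J_def by (auto intro: sum_nonneg)
    have xj: "x j = 1 - r - y" using r(1) sumI[of x] y_def by simp
    have y12: "y \<le> 1/2" using xj j r by simp
    have "psi y \<le> (\<Sum>i\<in>J. psi (x i))" unfolding y_def
      using finJ x0 J_def y12 y_def by (intro psi_sum) auto
    moreover have "(\<Sum>i\<in>I. psi (x i)) = psi (x j) + (\<Sum>i\<in>J. psi (x i))" by (rule sumI)
    moreover have "psi (x j) = xlnx (r + y) - xlnx (1 - r - y)" unfolding psi_def xj by simp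
    moreover have "xlnx y + xlnx r \<le> xlnx (y + r)" using y0 r by (intro xlnx_superadd)
    moreover have "xlnx (1 - r - y) + xlnx r \<le> xlnx ((1 - r - y) + r)"
      using xj j r by (intro xlnx_superadd) auto
    moreover have "psi y = xlnx (1 - y) - xlnx y" by (simp add: psi_def)
    ultimately show ?thesis by (simp add: algebra_simps)
  qed
qed


lemma fin_E: assumes "finite_graph V E" shows "finite E"
proof -
  have "E \<subseteq> Pow V" using assms unfolding finite_graph_def by auto
  then show ?thesis using assms unfolding finite_graph_def by (meson finite_Pow_iff finite_subset)
qed

lemma fin_inc: assumes "finite_graph V E" shows "finite (incident E v)"
  using fin_E[OF assms] unfolding incident_def by auto

lemma halving:
  fixes h :: "'v set \<Rightarrow> real"
  assumes G: "finite_graph V E"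
  shows "(\<Sum>e\<in>E. h e) = (\<Sum>v\<in>V. (\<Sum>e\<in>incident E v. h e) / 2)"
proof -
  have fV: "finite V" using G unfolding finite_graph_def by auto
  have fE: "finite E" using fin_E[OF G] .
  have "(\<Sum>v\<in>V. (\<Sum>e\<in>incident E v. h e) / 2) = (\<Sum>v\<in>V. \<Sum>e\<in>{e. e \<in> E \<and> v \<in> e}. h e / 2)"
    unfolding incident_def by (simp add: sum_divide_distrib)
  also have "\<dots> = (\<Sum>e\<in>E. \<Sum>v\<in>{v. v \<in> V \<and> v \<in> e}. h e / 2)"
    by (rule sum.swap_restrict[OF fV fE])
  also have "\<dots> = (\<Sum>e\<in>E. h e)"
  proof (rule sum.cong[OF refl])
    fix e assume e: "e \<in> E"
    then have "{v. v \<in> V \<and> v \<in> e} = e" "card e = 2" using G unfolding finite_graph_def by auto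
    then show "(\<Sum>v\<in>{v. v \<in> V \<and> v \<in> e}. h e / 2) = h e" by simp
  qed
  finally show ?thesis by simp
qed

lemma FM_facts:
  assumes G: "finite_graph V E" and x: "x \<in> FM V E"
  shows "\<And>e. e \<in> E \<Longrightarrow> 0 \<le> x e" "\<And>e. e \<in> E \<Longrightarrow> x e \<le> 1"
    "\<And>v. v \<in> V \<Longrightarrow> 0 \<le> 1 - (\<Sum>e\<in>incident E v. x e)"
proof -
  show x0: "0 \<le> x e" if "e \<in> E" for e using x that unfolding FM_def by auto
  show "0 \<le> 1 - (\<Sum>e\<in>incident E v. x e)" if "v \<in> V" for v using x that unfolding FM_def by auto
  fix e assume e: "e \<in> E"
  then have "card e = 2" "e \<subseteq> V" using G unfolding finite_graph_def by auto
  then obtain v where v: "v \<in> e" "v \<in> V" by (metis card.empty ex_in_conv subset_iff zero_neq_numeral)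
  have "x e \<le> (\<Sum>e\<in>incident E v. x e)"
    using fin_inc[OF G] e v x0 unfolding incident_def by (intro member_le_sum) auto
  also have "\<dots> \<le> 1" using x v unfolding FM_def by auto
  finally show "x e \<le> 1" .
qed

lemma aff_nonneg:
  fixes a d s :: real
  assumes "0 \<le> a" "0 \<le> a + d" "0 \<le> s" "s \<le> 1"
  shows "0 \<le> a + s * d"
proof -
  have "a + s * d = (1 - s) * a + s * (a + d)" by (simp add: algebra_simps)
  also have "\<dots> \<ge> 0" using assms by (simp add: add_nonneg_nonneg)
  finally show ?thesis .
qed

lemma nonneg_part:
  assumes G: "finite_graph V E" and x: "x \<in> FM V E"
  shows "0 \<le> bethe_entropy V E x"
proof -
  have fV: "finite V" using G unfolding finite_graph_def by auto
  have "bethe_entropy V E x = (\<Sum>e\<in>E. psi (x e)) - (\<Sum>v\<in>V. xlnx (1 - (\<Sum>e\<in>incident E v. x e)))"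
    unfolding bethe_entropy_def psi_def by simp
  also have "\<dots> = (\<Sum>v\<in>V. (\<Sum>e\<in>incident E v. psi (x e)) / 2 - xlnx (1 - (\<Sum>e\<in>incident E v. x e)))"
    unfolding halving[OF G] by (simp add: sum_subtractf)
  also have "\<dots> \<ge> 0"
  proof (rule sum_nonneg)
    fix v assume v: "v \<in> V"
    show "0 \<le> (\<Sum>e\<in>incident E v. psi (x e)) / 2 - xlnx (1 - (\<Sum>e\<in>incident E v. x e))"
      by (rule vertex_nonneg[OF fin_inc[OF G]])
         (use FM_facts[OF G x] v in \<open>auto simp: incident_def\<close>)
  qed
  finally show ?thesis .
qed


lemma concave_part:
  assumes G: "finite_graph V E" and x: "x \<in> FM V E" and y: "y \<in> FM V E"
    and t: "0 \<le> t" "t \<le> 1"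
  shows "t * bethe_entropy V E x + (1 - t) * bethe_entropy V E y
         \<le> bethe_entropy V E (\<lambda>e. t * x e + (1 - t) * y e)"
proof -
  have fV: "finite V" using G unfolding finite_graph_def by auto
  have fE: "finite E" using fin_E[OF G] .
  note fx = FM_facts[OF G x] and fy = FM_facts[OF G y]
  define d where "d e = x e - y e" for e
  define D where "D v = (\<Sum>e\<in>incident E v. d e)" for v
  define R where "R v = 1 - (\<Sum>e\<in>incident E v. y e)" for v
  define g where "g s = (\<Sum>e\<in>E. - xlnx (y e + s * d e) + xlnx ((1 - y e) + s * (- d e)))
      - (\<Sum>v\<in>V. xlnx (R v + s * (- D v)))" for s
  define g1 where "g1 s = (\<Sum>e\<in>E. - (d e * (ln (y e + s * d e) + 1)) + (- d e) * (ln ((1 - y e) + s * (- d e)) + 1))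
      - (\<Sum>v\<in>V. (- D v) * (ln (R v + s * (- D v)) + 1))" for s
  define g2 where "g2 s = (\<Sum>e\<in>E. - (d e^2 / (y e + s * d e)) + (- d e)^2 / ((1 - y e) + s * (- d e)))
      - (\<Sum>v\<in>V. (- D v)^2 / (R v + s * (- D v)))" for s
  have incE: "e \<in> E" if "e \<in> incident E v" for e v using that unfolding incident_def by auto
  have A1: "0 \<le> y e" "0 \<le> y e + d e" if "e \<in> E" for e using fx fy that d_def by auto
  have A2: "0 \<le> 1 - y e" "0 \<le> (1 - y e) + (- d e)" if "e \<in> E" for e using fx fy that d_def by auto
  have RD: "R v + (- D v) = 1 - (\<Sum>e\<in>incident E v. x e)" for v
    unfolding R_def D_def d_def by (simp add: sum_subtractf)
  have A3: "0 \<le> R v" "0 \<le> R v + (- D v)" if "v \<in> V" for v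
    using fy(3)[OF that] fx(3)[OF that] RD[of v] unfolding R_def by linarith+
  have geq: "g s = bethe_entropy V E (\<lambda>e. y e + s * (x e - y e))" for s
  proof -
    have e3: "R v + s * (- D v) = 1 - (\<Sum>e\<in>incident E v. y e + s * (x e - y e))" for v
      unfolding R_def D_def d_def by (simp add: sum.distrib sum_distrib_left)
    have e1: "(1 - y e) + s * (- d e) = 1 - (y e + s * (x e - y e))" for e
      unfolding d_def by (simp add: algebra_simps)
    have e2: "y e + s * d e = y e + s * (x e - y e)" for e unfolding d_def ..
    show ?thesis unfolding g_def bethe_entropy_def e1 e2 e3 by simp
  qed
  have "t * g 1 + (1 - t) * g 0 \<le> g t"
  proof (rule concave_interval[of g g1 g2])
    show "continuous_on {0..1} g" unfolding g_def
      by (intro continuous_on_diff continuous_on_sum continuous_on_add continuous_on_minus term_cont A1 A2 A3) auto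
    fix s :: real assume s: "0 < s" "s < 1"
    show "(g has_real_derivative g1 s) (at s)" unfolding g_def g1_def
      by (intro DERIV_diff DERIV_sum DERIV_add DERIV_minus term_deriv(1) A1 A2 A3 s) auto
    show "(g1 has_real_derivative g2 s) (at s)" unfolding g1_def g2_def
      by (intro DERIV_diff DERIV_sum DERIV_add DERIV_minus term_deriv(2) A1 A2 A3 s) auto
    define z where "z e = y e + s * d e" for e
    have z1: "(1 - y e) + s * (- d e) = 1 - z e" for e unfolding z_def by (simp add: algebra_simps)
    have z2: "R v + s * (- D v) = 1 - (\<Sum>e\<in>incident E v. z e)" for v
      unfolding R_def D_def z_def by (simp add: sum.distrib sum_distrib_left)
    have "g2 s = (\<Sum>e\<in>E. d e^2 / (1 - z e) - d e^2 / z e) - (\<Sum>v\<in>V. D v^2 / (1 - (\<Sum>e\<in>incident E v. z e)))"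
      unfolding g2_def z1 z2 by (simp add: z_def)
    also have "\<dots> = (\<Sum>v\<in>V. (\<Sum>e\<in>incident E v. d e^2 / (1 - z e) - d e^2 / z e) / 2
        - D v^2 / (1 - (\<Sum>e\<in>incident E v. z e)))"
      unfolding halving[OF G] by (simp add: sum_subtractf)
    also have "\<dots> \<le> 0"
    proof (rule sum_nonpos)
      fix v assume v: "v \<in> V"
      have "(\<Sum>e\<in>incident E v. d e^2 / (1 - z e) - d e^2 / z e) \<le> 2 * (\<Sum>e\<in>incident E v. d e)^2 / (1 - (\<Sum>e\<in>incident E v. z e))"
      proof (rule vertex_ineq[OF fin_inc[OF G]])
        show "0 \<le> z e" if "e \<in> incident E v" for e
          unfolding z_def using A1[OF incE[OF that]] s by (intro aff_nonneg) auto
        show "0 \<le> 1 - (\<Sum>e\<in>incident E v. z e)"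
          unfolding z2[symmetric] using A3[OF v] s by (intro aff_nonneg) auto
        show "0 < z e \<and> z e < 1" if "e \<in> incident E v" "d e \<noteq> 0" for e
        proof -
          have "0 < y e + s * d e" using A1[OF incE[OF that(1)]] s that(2) by (intro pos_interior) auto
          moreover have "0 < (1 - y e) + s * (- d e)" using A2[OF incE[OF that(1)]] s that(2) by (intro pos_interior) auto
          ultimately show ?thesis unfolding z_def by (simp add: algebra_simps)
        qed
        show "0 < 1 - (\<Sum>e\<in>incident E v. z e)" if "(\<Sum>e\<in>incident E v. d e) \<noteq> 0"
          unfolding z2[symmetric] using A3[OF v] s that unfolding D_def by (intro pos_interior) auto
      qed simp
      then show "(\<Sum>e\<in>incident E v. d e^2 / (1 - z e) - d e^2 / z e) / 2
        - D v^2 / (1 - (\<Sum>e\<in>incident E v. z e)) \<le> 0" unfolding D_def by (simp add: mult.commute)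
    qed
    finally show "g2 s \<le> 0" .
  qed (use t in auto)
  moreover have "g 1 = bethe_entropy V E x" unfolding geq by simp
  moreover have "g 0 = bethe_entropy V E y" unfolding geq by simp
  moreover have "(\<lambda>e. y e + t * (x e - y e)) = (\<lambda>e. t * x e + (1 - t) * y e)"
    by (rule ext) (simp add: algebra_simps)
  ultimately show ?thesis unfolding geq by simp
qed

theorem proposition4p17:
  fixes V :: "'v set" and E :: "'v set set"
  assumes "finite_graph V E"
  shows "(\<forall>x\<in>FM V E. bethe_entropy V E x \<ge> 0) \<and> concave_on_set (FM V E) (bethe_entropy V E)"
  using nonneg_part[OF assms] concave_part[OF assms] unfolding concave_on_set_def by auto


end
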